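(* Let $\ell>r\ge 2$ be integers and let $m=m_{r,\ell}$. Then (i) $m>\max\left\{\frac{\ell(r-1)}{2(\ell-r)},\,r-1\right\}$; and (ii) $m<\min\left\{\frac{\ell(\ell-1)}{2(\ell-r)},\,\frac{r}{\alpha}\right\}$, where $\alpha=\alpha(\ell/r)$ is the unique positive real root of the equation $e^{(\ell/r)x}(1-x)=1$, and $\alpha\in(1-r^2/\ell^2,\,1)$. In particular, $m<\frac{r\ell^2}{\ell^2-r^2}$.
   Context: $m_{r,\ell}$ is the unique integer $k\ge r$ maximizing $f(k)=\frac{(k-1)(k-2)\cdots(k-r+1)}{k^{\ell-1}}$ over all integers $k\ge r$. *)

theory Defs
  imports Complex_Main
begin

definition f_rl :: "nat \<Rightarrow> nat \<Rightarrow> nat \<Rightarrow> real" where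
  "f_rl r l k = (\<Prod>i=1..r-1. real k - real i) / real k ^ (l - 1)"

definition m_rl :: "nat \<Rightarrow> nat \<Rightarrow> nat" where
  "m_rl r l = (THE k. r \<le> k \<and> (\<forall>j. r \<le> j \<longrightarrow> f_rl r l j \<le> f_rl r l k))"

definition alpha_root :: "real \<Rightarrow> real" where
  "alpha_root c = (THE x. x > 0 \<and> exp (c * x) * (1 - x) = 1)"

end

theory Submission
  imports Defs "HOL-Real_Asymp.Real_Asymp"
begin


definition FF :: "real \<Rightarrow> real \<Rightarrow> real \<Rightarrow> real" where
  "FF r l k = l * ln k - ln (k - r + 1) - (l - 1) * ln (k + 1)"

lemma FF_deriv:
  assumes "r - 1 < k" "1 \<le> r" "r < l"
  shows "(FF r l has_real_derivative ((l-r) * (k - l*(r-1)/(l-r)) / (k*(k+1)*(k-r+1)))) (at k)"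
proof -
  have "l/k - 1/(k-r+1) - (l-1)/(k+1) = ((l-r)*k - l*(r-1)) / (k*(k+1)*(k-r+1))"
  proof -
    define t where "t = k - r + 1"
    have r: "r = k + 1 - t" using t_def by simp
    have "k \<noteq> 0" "k + 1 \<noteq> 0" "t \<noteq> 0" using assms t_def by auto
    thus ?thesis unfolding r by (simp add: field_simps)
  qed
  moreover have "(l-r)*k - l*(r-1) = (l-r) * (k - l*(r-1)/(l-r))" if "l \<noteq> r"
    using that by (simp add: field_simps)
  moreover have "(FF r l has_real_derivative (l/k - 1/(k-r+1) - (l-1)/(k+1))) (at k)"
    unfolding FF_def using assms by (auto intro!: derivative_eq_intros)
  ultimately show ?thesis using assms by auto
qed

lemma FF_lim: "(FF r l \<longlongrightarrow> 0) at_top"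
  unfolding FF_def by real_asymp

context
  fixes r l :: real
  assumes r2: "2 \<le> r" and rl: "r < l"
begin

definition "KK = l*(r-1)/(l-r)"

lemma KK_gt: "r - 1 < KK"
proof -
  have "(r-1)*(l-r) < l*(r-1)" using r2 rl by (simp add: algebra_simps)
  thus ?thesis unfolding KK_def using rl by (simp add: field_simps)
qed

lemma FF_dec: assumes "r - 1 < a" "a \<le> b" "b \<le> KK" shows "FF r l b \<le> FF r l a"
proof (rule DERIV_nonpos_imp_nonincreasing[OF assms(2)])
  fix x assume x: "a \<le> x" "x \<le> b"
  have "(l-r) * (x - KK) / (x*(x+1)*(x-r+1)) \<le> 0"
    using x assms rl r2 by (intro divide_nonpos_pos mult_nonneg_nonpos mult_pos_pos) auto
  thus "\<exists>y. (FF r l has_real_derivative y) (at x) \<and> y \<le> 0"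
    using FF_deriv[of r x l] x assms r2 rl unfolding KK_def by auto
qed

lemma FF_inc: assumes "KK \<le> a" "a < b" shows "FF r l a < FF r l b"
proof (rule DERIV_pos_imp_increasing_open[OF assms(2)])
  fix x assume x: "a < x" "x < b"
  have "(l-r) * (x - KK) / (x*(x+1)*(x-r+1)) > 0"
    using x assms rl KK_gt r2 by (intro divide_pos_pos mult_pos_pos) auto
  thus "\<exists>y. (FF r l has_real_derivative y) (at x) \<and> y > 0"
    using FF_deriv[of r x l] x assms r2 rl KK_gt unfolding KK_def by auto
next
  show "continuous_on {a..b} (FF r l)"
  proof (rule continuous_at_imp_continuous_on, intro ballI)
    fix x assume "x \<in> {a..b}"
    hence "r - 1 < x" using assms KK_gt by auto
    thus "isCont (FF r l) x" using FF_deriv[of r x l] r2 rl DERIV_isCont by fastforce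
  qed
qed

lemma FF_neg: assumes "KK \<le> x" shows "FF r l x < 0"
proof -
  have "FF r l x < FF r l (x+1)" using FF_inc assms by auto
  moreover have "FF r l (x+1) \<le> 0"
  proof (rule tendsto_lowerbound[OF FF_lim])
    show "\<forall>\<^sub>F i in at_top. FF r l (x + 1) \<le> FF r l i"
      unfolding eventually_at_top_linorder
      using FF_inc[of "x+1"] assms by (auto intro!: exI[of _ "x+2"] less_imp_le)
  qed auto
  ultimately show ?thesis by linarith
qed

definition "hh k = k^2/((k+1)*(k-r+1))"
definition "CC = (l-r) * hh KK"
definition "GG k = FF r l k - CC * (KK/2 - k)/k^2"

lemma CC_pos: "CC > 0"
  unfolding CC_def hh_def using KK_gt rl r2 by (intro mult_pos_pos divide_pos_pos) auto

lemma aux_deriv: assumes "k \<noteq> 0"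
  shows "((\<lambda>k. CC * (KK/2 - k)/k^2) has_real_derivative CC*(k-KK)/k^3) (at k)"
proof -
  have "((\<lambda>k. CC * (KK/2 - k)/k^2) has_real_derivative
     (CC * (- 1) * k^2 - CC * (KK/2 - k) * (2 * k)) / (k^2)^2) (at k)"
    using assms by (auto intro!: derivative_eq_intros simp: power2_eq_square)
  moreover have "(CC * (- 1) * k^2 - CC * (KK/2 - k) * (2 * k)) / (k^2)^2 = CC*(k-KK)/k^3"
    using assms by (simp add: field_simps power2_eq_square power3_eq_cube)
  ultimately show ?thesis by simp
qed

lemma hh_diff: assumes "r - 1 < k" "r - 1 < K"
  shows "hh k - hh K = (K - k) * ((r-2)*k*K + (r-1)*(K+k)) / ((k+1)*(k-r+1)*(K+1)*(K-r+1))"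
proof -
  define A where "A = (k+1)*(k-r+1)"
  define B where "B = (K+1)*(K-r+1)"
  have A: "A \<noteq> 0" unfolding A_def using assms r2 by auto
  have B: "B \<noteq> 0" unfolding B_def using assms r2 by auto
  have "hh k - hh K = (k^2*B - K^2*A)/(A*B)"
    unfolding hh_def A_def[symmetric] B_def[symmetric] using A B by (simp add: diff_frac_eq)
  also have "k^2*B - K^2*A = (K - k) * ((r-2)*k*K + (r-1)*(K+k))"
    unfolding A_def B_def by (simp add: power2_eq_square algebra_simps)
  also have "A*B = (k+1)*(k-r+1)*(K+1)*(K-r+1)" unfolding A_def B_def by (simp add: mult.assoc)
  finally show ?thesis .
qed

lemma GG_deriv: assumes "r - 1 < k"
  shows "\<exists>y. (GG has_real_derivative y) (at k) \<and> y \<le> 0"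
proof -
  have k0: "k > 0" "k + 1 > 0" "k - r + 1 > 0" using assms r2 by auto
  define D where "D = (l-r) * (k - KK) / (k*(k+1)*(k-r+1)) - CC*(k-KK)/k^3"
  have FD: "(FF r l has_real_derivative (l-r) * (k - KK) / (k*(k+1)*(k-r+1))) (at k)"
    using FF_deriv[of r k l] assms r2 rl unfolding KK_def by auto
  have "(GG has_real_derivative D) (at k)"
    unfolding GG_def[abs_def] D_def
    using FD aux_deriv[of k] k0 by (intro DERIV_diff) auto
  moreover have "D = (l-r) * (k - KK) / k^3 * (hh k - hh KK)"
  proof -
    define A where "A = (k+1)*(k-r+1)"
    have A: "A \<noteq> 0" unfolding A_def using k0 by auto
    have e1: "(l-r) * (k - KK) / k^3 * hh k = (l-r) * (k - KK) / (k*A)"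
      unfolding hh_def A_def[symmetric] using A k0 by (simp add: field_simps power2_eq_square power3_eq_cube)
    have e2: "(l-r) * (k - KK) / k^3 * hh KK = CC*(k-KK)/k^3" unfolding CC_def by simp
    have "D = (l-r) * (k - KK) / (k*A) - CC*(k-KK)/k^3" unfolding D_def A_def by (simp add: mult.assoc)
    also have "\<dots> = (l-r) * (k - KK) / k^3 * hh k - (l-r) * (k - KK) / k^3 * hh KK"
      unfolding e1 e2 ..
    also have "\<dots> = (l-r) * (k - KK) / k^3 * (hh k - hh KK)" by (rule right_diff_distrib[symmetric])
    finally show ?thesis .
  qed
  moreover have "(k - KK) * (hh k - hh KK) \<le> 0"
  proof -
    define N where "N = (r-2)*k*KK + (r-1)*(KK+k)"
    define Den where "Den = (k+1)*(k-r+1)*(KK+1)*(KK-r+1)"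
    have "(k - KK) * (hh k - hh KK) = (k - KK) * ((KK - k) * N / Den)"
      unfolding hh_diff[OF assms KK_gt] N_def Den_def ..
    also have "\<dots> = ((k - KK) * ((KK - k) * N)) / Den" by simp
    also have "(k - KK) * ((KK - k) * N) = - ((k - KK)^2 * N)" by (simp add: power2_eq_square algebra_simps)
    also have "- ((k - KK)^2 * N) / Den = - ((k - KK)^2 * N / Den)" by simp
    finally have "(k - KK) * (hh k - hh KK) = - ((k - KK)^2 * ((r-2)*k*KK + (r-1)*(KK+k)) / ((k+1)*(k-r+1)*(KK+1)*(KK-r+1)))"
      unfolding N_def Den_def .
    moreover have "(k - KK)^2 * ((r-2)*k*KK + (r-1)*(KK+k)) / ((k+1)*(k-r+1)*(KK+1)*(KK-r+1)) \<ge> 0"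
      using k0 KK_gt r2 by (intro divide_nonneg_pos mult_nonneg_nonneg add_nonneg_nonneg mult_pos_pos) auto
    ultimately show ?thesis by linarith
  qed
  note neg = this
  have "(l-r) / k^3 \<ge> 0" using rl k0 by simp
  hence "(l-r) / k^3 * ((k - KK) * (hh k - hh KK)) \<le> 0" using neg by (rule mult_nonneg_nonpos)
  moreover have "(l-r) * (k - KK) / k^3 * (hh k - hh KK) = (l-r) / k^3 * ((k - KK) * (hh k - hh KK))"
    by (simp add: mult.assoc mult.commute mult.left_commute)
  ultimately show ?thesis by metis
qed

lemma GG_lim: "(GG \<longlongrightarrow> 0) at_top"
proof -
  have "((\<lambda>k. CC * (KK/2 - k)/k^2) \<longlongrightarrow> 0) at_top" by real_asymp
  from tendsto_diff[OF FF_lim this]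
  have "((\<lambda>k. FF r l k - CC * (KK/2 - k)/k^2) \<longlongrightarrow> 0 - 0) at_top" .
  thus ?thesis unfolding GG_def[abs_def] by simp
qed

lemma GG_nonneg: assumes "r - 1 < x" shows "GG x \<ge> 0"
proof (rule tendsto_upperbound[OF GG_lim])
  show "\<forall>\<^sub>F i in at_top. GG i \<le> GG x"
    unfolding eventually_at_top_linorder
  proof (intro exI[of _ x] allI impI)
    fix y assume "x \<le> y"
    show "GG y \<le> GG x"
    proof (rule DERIV_nonpos_imp_nonincreasing[OF \<open>x \<le> y\<close>])
      fix z assume "x \<le> z" "z \<le> y"
      hence "r - 1 < z" using assms by linarith
      thus "\<exists>d. (GG has_real_derivative d) (at z) \<and> d \<le> 0" by (rule GG_deriv)
    qed
  qed
qed (rule trivial_limit_at_top_linorder)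

lemma FF_neg_imp: assumes "r - 1 < x" "FF r l x < 0" shows "KK/2 < x"
proof -
  have "GG x \<ge> 0" using GG_nonneg assms by auto
  hence "CC * (KK/2 - x)/x^2 < 0" using assms unfolding GG_def by auto
  hence "CC * (KK/2 - x) < 0" by (simp add: divide_less_0_iff)
  thus ?thesis using CC_pos by (simp add: mult_less_0_iff)
qed

end


definition psi :: "real \<Rightarrow> real \<Rightarrow> real" where "psi c x = exp (c*x) * (1 - x)"

lemma psi_deriv: "(psi c has_real_derivative exp (c*x) * (c*(1-x) - 1)) (at x)"
  unfolding psi_def by (auto intro!: derivative_eq_intros simp: algebra_simps)

lemma psi_cont: "continuous_on S (psi c)"
  unfolding psi_def by (intro continuous_intros)

context fixes c :: real assumes c1: "1 < c"
begin

lemma psi_gt1: assumes "0 < x" "x \<le> 1 - 1/c" shows "psi c x > 1"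
proof -
  have "psi c 0 < psi c x"
  proof (rule DERIV_pos_imp_increasing_open[OF assms(1)])
    fix y assume y: "0 < y" "y < x"
    have "c*y < c*x" using y c1 by simp
    moreover have "c*x \<le> c - 1" using assms c1 by (simp add: field_simps)
    ultimately have "c*(1-y) - 1 > 0" by (simp add: algebra_simps)
    hence "exp (c*y) * (c*(1-y) - 1) > 0" by simp
    thus "\<exists>d. (psi c has_real_derivative d) (at y) \<and> 0 < d" using psi_deriv[of c y] by blast
  qed (rule psi_cont)
  thus ?thesis by (simp add: psi_def)
qed

lemma psi_dec: assumes "1 - 1/c \<le> x" "x < y" shows "psi c y < psi c x"
proof (rule DERIV_neg_imp_decreasing_open[OF assms(2)])
  fix z assume z: "x < z" "z < y"
  have "c*x < c*z" using z c1 by simp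
  moreover have "c - 1 \<le> c*x" using assms c1 by (simp add: field_simps)
  ultimately have "c*(1-z) - 1 < 0" by (simp add: algebra_simps)
  hence "exp (c*z) * (c*(1-z) - 1) < 0" by (simp add: mult_pos_neg)
  thus "\<exists>d. (psi c has_real_derivative d) (at z) \<and> d < 0" using psi_deriv[of c z] by blast
qed (rule psi_cont)

lemma psi_root_ex: "\<exists>a. 1 - 1/c < a \<and> a < 1 \<and> psi c a = 1"
proof -
  have x0: "0 < 1 - 1/c" "1 - 1/c < 1" using c1 by (auto simp: field_simps)
  have p0: "psi c (1 - 1/c) > 1" using psi_gt1 x0 by auto
  have p1: "psi c 1 = 0" by (simp add: psi_def)
  obtain a where a: "1 - 1/c \<le> a" "a \<le> 1" "psi c a = 1"
    using IVT2[of "psi c" 1 1 "1 - 1/c"] p0 p1 x0 psi_deriv DERIV_isCont by fastforce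
  have "a \<noteq> 1 - 1/c" "a \<noteq> 1" using a p0 p1 by auto
  hence "1 - 1/c < a" "a < 1" using a by auto
  thus ?thesis using a(3) by blast
qed

lemma psi_root_unique: "\<exists>!x. x > 0 \<and> exp (c * x) * (1 - x) = 1"
proof -
  obtain a where a: "1 - 1/c < a" "a < 1" "psi c a = 1" using psi_root_ex by blast
  have x0: "0 < 1 - 1/c" using c1 by (auto simp: field_simps)
  show ?thesis
  proof (rule ex1I[of _ a])
    show "a > 0 \<and> exp (c * a) * (1 - a) = 1" using a x0 by (simp add: psi_def)
  next
    fix x assume x: "x > 0 \<and> exp (c * x) * (1 - x) = 1"
    hence px: "psi c x = 1" by (simp add: psi_def)
    have "\<not> x \<le> 1 - 1/c"
    proof
      assume "x \<le> 1 - 1/c"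
      hence "psi c x > 1" using psi_gt1 x by blast
      thus False using px by simp
    qed
    hence x0': "1 - 1/c \<le> x" by simp
    show "x = a"
    proof (rule ccontr)
      assume "x \<noteq> a"
      hence "x < a \<or> a < x" by linarith
      thus False
      proof
        assume "x < a" thus False using psi_dec[OF x0' \<open>x < a\<close>] a(3) px by simp
      next
        assume "a < x" thus False using psi_dec[OF less_imp_le[OF a(1)] \<open>a < x\<close>] a(3) px by simp
      qed
    qed
  qed
qed

lemma alpha_props: "alpha_root c > 1 - 1/c \<and> alpha_root c < 1 \<and> psi c (alpha_root c) = 1"
proof -
  obtain a where a: "1 - 1/c < a" "a < 1" "psi c a = 1" using psi_root_ex by blast
  have x0: "0 < 1 - 1/c" using c1 by (auto simp: field_simps)
  have "alpha_root c = a"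
    unfolding alpha_root_def
  proof (rule the1_equality[OF psi_root_unique])
    have "a > 0" using a(1) x0 by linarith
    moreover have "exp (c * a) * (1 - a) = 1" using a(3) unfolding psi_def .
    ultimately show "a > 0 \<and> exp (c * a) * (1 - a) = 1" by blast
  qed
  thus ?thesis using a by auto
qed

lemma psi_lt1_imp: assumes "0 < x" "psi c x < 1" shows "alpha_root c < x"
proof -
  have al: "alpha_root c > 1 - 1/c" "psi c (alpha_root c) = 1" using alpha_props by auto
  have "\<not> x \<le> 1 - 1/c"
  proof
    assume "x \<le> 1 - 1/c"
    hence "psi c x > 1" using psi_gt1 assms by blast
    thus False using assms by simp
  qed
  hence x0': "1 - 1/c \<le> x" by simp
  show ?thesis
  proof (rule ccontr)
    assume "\<not> alpha_root c < x"
    hence "x = alpha_root c \<or> x < alpha_root c" by linarith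
    thus False
    proof
      assume "x = alpha_root c" thus False using al assms by simp
    next
      assume "x < alpha_root c" thus False using psi_dec[OF x0' \<open>x < alpha_root c\<close>] al assms by simp
    qed
  qed
qed

lemma psi_gt1_imp: assumes "0 < x" "psi c x > 1" shows "x < alpha_root c"
proof -
  have al: "alpha_root c > 1 - 1/c" "psi c (alpha_root c) = 1" using alpha_props by auto
  show ?thesis
  proof (rule ccontr)
    assume "\<not> x < alpha_root c"
    hence "x = alpha_root c \<or> alpha_root c < x" by linarith
    thus False
    proof
      assume "x = alpha_root c" thus False using al assms by simp
    next
      assume "alpha_root c < x" thus False using psi_dec[OF less_imp_le[OF al(1)] \<open>alpha_root c < x\<close>] al assms by simp
    qed
  qed
qed

lemma exp_gt_sq: "exp (c - 1/c) > c^2"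
proof -
  have "(\<lambda>x. x - 1/x - 2 * ln x) 1 < (\<lambda>x. x - 1/x - 2 * ln x) c"
  proof (rule DERIV_pos_imp_increasing_open[OF c1])
    fix x :: real assume x: "1 < x" "x < c"
    have "((\<lambda>x. x - 1/x - 2 * ln x) has_real_derivative (x - 1)^2 / x^2) (at x)"
      using x by (auto intro!: derivative_eq_intros simp: field_simps power2_eq_square)
    moreover have "(x - 1)^2 / x^2 > 0" using x by simp
    ultimately show "\<exists>y. ((\<lambda>x. x - 1/x - 2 * ln x) has_real_derivative y) (at x) \<and> y > 0"
      by blast
  next
    show "continuous_on {1..c} (\<lambda>x. x - 1/x - 2 * ln x)"
      by (intro continuous_intros) auto
  qed
  hence "2 * ln c < c - 1/c" by simp
  hence "exp (2 * ln c) < exp (c - 1/c)" by simp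
  moreover have "exp (2 * ln c) = c^2"
  proof -
    have "exp (2 * ln c) = exp (ln c) ^ 2" using exp_of_nat_mult[of 2 "ln c"] by simp
    thus ?thesis using c1 by simp
  qed
  ultimately show ?thesis by simp
qed

lemma alpha_lower: "1 - 1/c^2 < alpha_root c"
proof (rule psi_gt1_imp)
  have "1/c^2 < 1" using c1 by (simp add: power_gt1)
  thus "0 < 1 - 1/c^2" by simp
  have cc: "c \<noteq> 0" using c1 by simp
  have "c * (1 - 1/c^2) = c - 1/c" using cc by (simp add: field_simps power2_eq_square)
  hence "psi c (1 - 1/c^2) = exp (c - 1/c) * (1/c^2)"
    unfolding psi_def by simp
  also have "\<dots> = exp (c - 1/c) / c^2" by simp
  finally show "psi c (1 - 1/c^2) > 1" using exp_gt_sq c1 by simp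
qed

end


lemma prod_shift: "(\<Prod>i=1..n. (x+1) - real i) * (x - real n) = x * (\<Prod>i=1..n. x - real i)"
proof (induction n)
  case 0 then show ?case by simp
next
  case (Suc n)
  have "(\<Prod>i=1..Suc n. (x+1) - real i) * (x - real (Suc n))
      = ((\<Prod>i=1..n. (x+1) - real i) * (x - real n)) * (x - real (Suc n))"
    by (simp add: prod.cl_ivl_Suc algebra_simps)
  also have "\<dots> = x * ((\<Prod>i=1..n. x - real i) * (x - real (Suc n)))" using Suc by simp
  also have "\<dots> = x * (\<Prod>i=1..Suc n. x - real i)" by (simp add: prod.cl_ivl_Suc)
  finally show ?case .
qed

definition Qn :: "nat \<Rightarrow> nat \<Rightarrow> nat \<Rightarrow> real" where
  "Qn r l k = real k ^ l - (real k - real r + 1) * (real k + 1)^(l-1)"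

lemma f_diff:
  assumes "2 \<le> r" "r < l" "r \<le> k"
  shows "\<exists>W>0. f_rl r l (k+1) - f_rl r l k = Qn r l k * W"
proof -
  define P where "P = (\<Prod>i=1..r-1. real k - real i)"
  define P' where "P' = (\<Prod>i=1..r-1. (real k + 1) - real i)"
  define t where "t = real k - real r + 1"
  define a where "a = real k ^ (l-1)"
  define b where "b = (real k + 1) ^ (l-1)"
  have Ppos: "P > 0" unfolding P_def using assms by (intro prod_pos) auto
  have t: "t > 0" unfolding t_def using assms by auto
  have a: "a > 0" unfolding a_def using assms by auto
  have b: "b > 0" unfolding b_def by auto
  have kl: "real k ^ l = real k * a"
  proof -
    have "l = Suc (l-1)" using assms by simp
    hence "real k ^ l = real k ^ Suc (l-1)" by simp
    thus ?thesis unfolding a_def by simp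
  qed
  have "P' * t = real k * P"
  proof -
    have F: "(\<Prod>i=1..r-1. (real k+1) - real i) * (real k - real (r-1)) = real k * (\<Prod>i=1..r-1. real k - real i)"
      by (rule prod_shift)
    have e: "real k - real (r-1) = real k - real r + 1" using assms by (simp add: of_nat_diff)
    show ?thesis using F unfolding e P'_def t_def P_def by simp
  qed
  hence P': "P' = real k * P / t" using t by (simp add: eq_divide_eq)
  have f1: "f_rl r l (k+1) = P' / b" unfolding f_rl_def P'_def b_def by (simp add: add.commute)
  have f0: "f_rl r l k = P / a" unfolding f_rl_def P_def a_def by simp
  have Q: "Qn r l k = real k * a - t * b" unfolding Qn_def kl t_def b_def ..
  have "f_rl r l (k+1) - f_rl r l k = Qn r l k * (P / (t * a * b))"
  proof -
    have "(real k * a - t * b) * (P / (t * a * b)) = (real k * a) * (P / (t * a * b)) - (t * b) * (P / (t * a * b))"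
      by (rule left_diff_distrib)
    also have "(real k * a) * (P / (t * a * b)) = real k * P / t / b" using t a b by (simp add: field_simps)
    also have "(t * b) * (P / (t * a * b)) = P / a" using t a b by (simp add: field_simps)
    finally show ?thesis unfolding f1 f0 P' Q by simp
  qed
  moreover have "P / (t * a * b) > 0" using Ppos t a b by simp
  ultimately show ?thesis by blast
qed

lemma Qn_nonzero:
  assumes "2 \<le> r" "r < l" "r \<le> k"
  shows "Qn r l k \<noteq> 0"
proof
  assume "Qn r l k = 0"
  hence h: "real k ^ l = (real k - real r + 1) * (real k + 1) ^ (l-1)"
    unfolding Qn_def by simp
  have e1: "real (k - r + 1) = real k - real r + 1" using assms by (simp add: of_nat_diff)
  have "real (k ^ l) = real ((k - r + 1) * (k+1)^(l-1))"
    unfolding of_nat_mult of_nat_power e1 using h by (simp add: add.commute)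
  hence e: "k ^ l = (k - r + 1) * (k+1)^(l-1)" by (simp only: of_nat_eq_iff)
  have "k dvd k ^ l" using assms by (intro dvd_power) auto
  hence "k dvd (k - r + 1) * (k+1)^(l-1)" unfolding e .
  moreover have "coprime k ((k+1)^(l-1))" by (intro coprime_power_right_iff[THEN iffD2]) simp
  ultimately have "k dvd (k - r + 1)" by (rule coprime_dvd_mult_left_iff[THEN iffD1, rotated])
  moreover have "0 < k - r + 1" "k - r + 1 < k" using assms by linarith+
  ultimately show False using nat_dvd_not_less[of "k - r + 1" k] by auto
qed

lemma FF_Qn:
  assumes "2 \<le> r" "r < l" "r \<le> k"
  shows "(FF (real r) (real l) (real k) < 0 \<longleftrightarrow> Qn r l k < 0) \<and>
         (FF (real r) (real l) (real k) > 0 \<longleftrightarrow> Qn r l k > 0)"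
proof -
  define A where "A = real k ^ l"
  define B where "B = (real k - real r + 1) * (real k + 1)^(l-1)"
  have k0: "real k > 0" "real k - real r + 1 > 0" using assms by auto
  have A: "A > 0" unfolding A_def using k0 by simp
  have B: "B > 0" unfolding B_def using k0 by simp
  have "FF (real r) (real l) (real k) = ln A - ln B"
    unfolding FF_def A_def B_def using k0 assms
    by (simp add: ln_realpow ln_mult of_nat_diff)
  moreover have "Qn r l k = A - B" unfolding Qn_def A_def B_def ..
  ultimately show ?thesis using A B by auto
qed

lemma Q_neg_persist:
  assumes "2 \<le> r" "r < l" "r \<le> k" "k \<le> j" "Qn r l k < 0"
  shows "Qn r l j < 0"
proof -
  have r2: "2 \<le> real r" and rl: "real r < real l" using assms by auto
  have Fk: "FF (real r) (real l) (real k) < 0" using FF_Qn[of r l k] assms by auto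
  have "FF (real r) (real l) (real j) < 0"
  proof (cases "real j \<le> KK (real r) (real l)")
    case True
    have "FF (real r) (real l) (real j) \<le> FF (real r) (real l) (real k)"
      using FF_dec[OF r2 rl, of "real k" "real j"] True assms by auto
    thus ?thesis using Fk by linarith
  next
    case False
    thus ?thesis using FF_neg[OF r2 rl, of "real j"] by auto
  qed
  thus ?thesis using FF_Qn[of r l j] assms by auto
qed

lemma inc_chain: "(\<And>i. a \<le> i \<Longrightarrow> i < b \<Longrightarrow> s i < s (Suc i)) \<Longrightarrow> a \<le> j \<Longrightarrow> j < b \<Longrightarrow> (s j :: real) < s b"
proof (induction b)
  case 0 then show ?case by simp
next
  case (Suc b)
  show ?case
  proof (cases "j = b")
    case True thus ?thesis using Suc.prems by auto
  next
    case False
    hence "s j < s b" using Suc by auto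
    also have "s b < s (Suc b)" using Suc.prems False by auto
    finally show ?thesis .
  qed
qed

lemma dec_chain: "(\<And>i. a \<le> i \<Longrightarrow> s (Suc i) < s i) \<Longrightarrow> a < j \<Longrightarrow> (s j :: real) < s a"
proof (induction j)
  case 0 then show ?case by simp
next
  case (Suc j)
  show ?case
  proof (cases "j = a")
    case True thus ?thesis using Suc.prems by auto
  next
    case False
    hence "s (Suc j) < s j" using Suc.prems by auto
    also have "s j < s a" using Suc False by auto
    finally show ?thesis .
  qed
qed

lemma m_props:
  assumes "2 \<le> r" "r < l"
  shows "r \<le> m_rl r l \<and> Qn r l (m_rl r l) < 0 \<and> (r < m_rl r l \<longrightarrow> Qn r l (m_rl r l - 1) > 0)"
proof -
  have r2: "2 \<le> real r" and rl: "real r < real l" using assms by auto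
  define k1 where "k1 = max r (nat \<lceil>KK (real r) (real l)\<rceil>)"
  have "real k1 \<ge> KK (real r) (real l)" unfolding k1_def by linarith
  hence "FF (real r) (real l) (real k1) < 0" using FF_neg[OF r2 rl] by auto
  hence ex: "r \<le> k1 \<and> Qn r l k1 < 0" using FF_Qn[of r l k1] assms unfolding k1_def by auto
  define k0 where "k0 = (LEAST k. r \<le> k \<and> Qn r l k < 0)"
  have k0: "r \<le> k0" "Qn r l k0 < 0" using LeastI[of "\<lambda>k. r \<le> k \<and> Qn r l k < 0", OF ex] unfolding k0_def by auto
  have below: "Qn r l j > 0" if "r \<le> j" "j < k0" for j
  proof -
    have "\<not> (r \<le> j \<and> Qn r l j < 0)" using not_less_Least[of j "\<lambda>k. r \<le> k \<and> Qn r l k < 0"] that unfolding k0_def by auto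
    hence "\<not> Qn r l j < 0" using that by auto
    moreover have "Qn r l j \<noteq> 0" using Qn_nonzero assms that by auto
    ultimately show ?thesis by linarith
  qed
  have above: "Qn r l j < 0" if "k0 \<le> j" for j using Q_neg_persist[of r l k0 j] assms k0 that by auto
  have inc: "f_rl r l j < f_rl r l (Suc j)" if jj: "r \<le> j" "j < k0" for j
  proof -
    obtain W where "W > 0" "f_rl r l (j+1) - f_rl r l j = Qn r l j * W" using f_diff[of r l j] assms jj by auto
    moreover have "Qn r l j > 0" using below jj by auto
    ultimately show ?thesis by (simp add: algebra_simps)
  qed
  have dec: "f_rl r l (Suc j) < f_rl r l j" if "k0 \<le> j" for j
  proof -
    have "r \<le> j" using k0(1) that by linarith
    then obtain W where "W > 0" "f_rl r l (j+1) - f_rl r l j = Qn r l j * W" using f_diff[of r l j] assms by auto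
    moreover have "Qn r l j < 0" using above that by auto
    ultimately show ?thesis by (simp add: algebra_simps mult_pos_neg)
  qed
  have strict: "f_rl r l j < f_rl r l k0" if "r \<le> j" "j \<noteq> k0" for j
  proof (cases "j < k0")
    case True thus ?thesis using inc_chain[of r k0 "f_rl r l" j] inc that by blast
  next
    case False
    hence "k0 < j" using that by auto
    thus ?thesis using dec_chain[of k0 "f_rl r l" j] dec by blast
  qed
  have "m_rl r l = k0"
    unfolding m_rl_def
  proof (rule the_equality)
    show "r \<le> k0 \<and> (\<forall>j. r \<le> j \<longrightarrow> f_rl r l j \<le> f_rl r l k0)"
      using k0 strict by (auto intro: less_imp_le)
  next
    fix k assume k: "r \<le> k \<and> (\<forall>j. r \<le> j \<longrightarrow> f_rl r l j \<le> f_rl r l k)"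
    show "k = k0"
    proof (rule ccontr)
      assume "k \<noteq> k0"
      hence "f_rl r l k < f_rl r l k0" using strict k by auto
      moreover have "f_rl r l k0 \<le> f_rl r l k" using k k0 by auto
      ultimately show False by simp
    qed
  qed
  moreover have "r < k0 \<Longrightarrow> Qn r l (k0 - 1) > 0" using below by auto
  ultimately show ?thesis using k0 by auto
qed

lemma bonf: assumes "0 \<le> u" "u \<le> 1"
  shows "(1 - u)^n \<le> 1 - real n * u + real n * (real n - 1) / 2 * u^2"
proof (induction n)
  case 0 then show ?case by simp
next
  case (Suc n)
  have "(1 - u)^Suc n = (1 - u) * (1 - u)^n" by simp
  also have "\<dots> \<le> (1 - u) * (1 - real n * u + real n * (real n - 1) / 2 * u^2)"
    using Suc assms by (intro mult_left_mono) auto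
  also have "\<dots> = 1 - real (Suc n) * u + real (Suc n) * (real (Suc n) - 1) / 2 * u^2
                  - real n * (real n - 1) / 2 * u^3"
    by (simp add: field_simps power2_eq_square power3_eq_cube)
  also have "\<dots> \<le> 1 - real (Suc n) * u + real (Suc n) * (real (Suc n) - 1) / 2 * u^2"
  proof -
    have "real n * (real n - 1) / 2 * u^3 \<ge> 0"
      using assms by (cases n) auto
    thus ?thesis by linarith
  qed
  finally show ?case .
qed

lemma exp_bound: assumes "0 \<le> u" "u \<le> 1" shows "(1 - u)^n \<le> exp (- (real n * u))"
proof -
  have "(1 - u)^n \<le> exp (-u)^n"
    using assms by (intro power_mono) (auto simp: exp_ge_add_one_self[of "-u", simplified])
  also have "\<dots> = exp (- (real n * u))" by (simp add: exp_of_nat_mult[symmetric])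
  finally show ?thesis .
qed

theorem lemma4p2:
  fixes r l :: nat
  assumes "2 \<le> r" and "r < l"
  defines "m \<equiv> real (m_rl r l)"
  defines "\<alpha> \<equiv> alpha_root (real l / real r)"
  shows "m > max (real l * (real r - 1) / (2 * (real l - real r))) (real r - 1)
       \<and> m < min (real l * (real l - 1) / (2 * (real l - real r))) (real r / \<alpha>)
       \<and> (\<exists>!x::real. x > 0 \<and> exp ((real l / real r) * x) * (1 - x) = 1)
       \<and> 1 - (real r)^2 / (real l)^2 < \<alpha> \<and> \<alpha> < 1
       \<and> m < real r * (real l)^2 / ((real l)^2 - (real r)^2)"
proof -
  define R where "R = real r"
  define L where "L = real l"
  define k where "k = m_rl r l"
  have r2: "2 \<le> R" and rl: "R < L" using assms(1,2) unfolding R_def L_def by auto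
  have mp: "r \<le> k" "Qn r l k < 0" "r < k \<Longrightarrow> Qn r l (k - 1) > 0"
    using m_props[OF assms(1,2)] unfolding k_def by auto
  have mk: "m = real k" unfolding m_def k_def ..
  have mR: "R \<le> m" using mp unfolding mk R_def by auto
  have mpos: "m > 0" using mR r2 by auto
  define c where "c = L / R"
  have c1: "1 < c" unfolding c_def using r2 rl by (simp add: field_simps)
  have ac: "\<alpha> = alpha_root c" unfolding \<alpha>_def c_def L_def R_def ..
  have aprops: "\<alpha> > 1 - 1/c" "\<alpha> < 1" using alpha_props[OF c1] ac by auto
  have apos: "\<alpha> > 0" using aprops c1 by (smt (verit) divide_less_eq_1_pos)
  have alow: "1 - 1/c^2 < \<alpha>" using alpha_lower[OF c1] ac by simp
  have c2: "1/c^2 = R^2/L^2" unfolding c_def by (simp add: power_divide)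
  have FFm: "FF R L m < 0" using FF_Qn[of r l k] mp assms unfolding R_def L_def mk by auto
  have "KK R L / 2 < m" using FF_neg_imp[OF r2 rl, of m] FFm mR r2 by auto
  moreover have "KK R L / 2 = L * (R - 1) / (2 * (L - R))" unfolding KK_def[OF r2 rl] by simp
  ultimately have B: "L * (R - 1) / (2 * (L - R)) < m" by simp
  have CD: "m < L * (L - 1) / (2 * (L - R)) \<and> m < R / \<alpha>"
  proof (cases "r < k")
    case False
    hence mr: "m = R" using mp unfolding mk R_def by auto
    have "(L - R) * (L - R - 1) \<ge> 0" using assms(2) unfolding L_def R_def by auto
    moreover have "R * (R - 1) > 0" using r2 by auto
    ultimately have "2 * R * (L - R) < L * (L - 1)" by (simp add: algebra_simps)
    hence C: "m < L * (L - 1) / (2 * (L - R))" using rl mr by (simp add: field_simps)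
    have "R < R / \<alpha>" using apos aprops r2 by (simp add: field_simps)
    thus ?thesis using C mr by auto
  next
    case True
    have Q: "Qn r l (k - 1) > 0" using mp True by auto
    have k1: "real (k - 1) = m - 1" using True unfolding mk by (simp add: of_nat_diff)
    have h1: "(m - 1)^l > (m - R) * m^(l-1)"
      using Q unfolding Qn_def k1 R_def by simp
    have "l = Suc (l-1)" using assms(2) by simp
    hence ml: "m^l = m * m^(l-1)" by (metis power_Suc)
    have mlpos: "m^(l-1) > 0" using mpos by simp
    have "(m - R) / m = (m - R) * m^(l-1) / m^l" unfolding ml using mlpos by simp
    also have "\<dots> < (m - 1)^l / m^l" using h1 mpos by (intro divide_strict_right_mono) auto
    finally have "(m - 1)^l / m^l > (m - R) / m" .
    moreover have "(1 - 1/m)^l = (m - 1)^l / m^l" using mpos by (simp add: field_simps power_divide)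
    moreover have "(m - R)/m = 1 - R * (1/m)" using mpos by (simp add: field_simps)
    ultimately have key: "(1 - 1/m)^l > 1 - R * (1/m)" by simp
    have u: "0 \<le> 1/m" "1/m \<le> 1" using mpos mR r2 by auto
    have "1 - R * (1/m) < 1 - L * (1/m) + L * (L - 1) / 2 * (1/m)^2"
      using key bonf[OF u, of l] unfolding L_def by linarith
    moreover have "(L - R) * (1/m) = L * (1/m) - R * (1/m)" by (rule left_diff_distrib)
    ultimately have h2: "(L - R) * (1/m) < L * (L - 1) / 2 * (1/m)^2" by linarith
    have "m^2 > 0" using mpos by simp
    from mult_strict_right_mono[OF h2 this]
    have h3: "(L - R) * (1/m) * m^2 < L * (L - 1) / 2 * (1/m)^2 * m^2" .
    have e1: "(L - R) * (1/m) * m^2 = (L - R) * m" using mpos by (simp add: power2_eq_square)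
    have e2: "L * (L - 1) / 2 * (1/m)^2 * m^2 = L * (L - 1) / 2" using mpos by (simp add: power2_eq_square)
    have "(L - R) * m < L * (L - 1) / 2" using h3 unfolding e1 e2 .
    hence C: "m < L * (L - 1) / (2 * (L - R))" using rl by (simp add: field_simps)
    have "1 - R * (1/m) < exp (- (L * (1/m)))"
      using key exp_bound[OF u, of l] unfolding L_def by linarith
    hence "exp (L/m) * (1 - R/m) < exp (L/m) * exp (- (L/m))" by simp
    also have "\<dots> = 1" by (simp add: exp_minus)
    finally have "psi c (R/m) < 1" unfolding psi_def c_def using r2 by simp
    hence "\<alpha> < R/m" using psi_lt1_imp[OF c1, of "R/m"] ac r2 mpos by auto
    hence "m < R/\<alpha>" using apos mpos by (simp add: field_simps)
    thus ?thesis using C by auto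
  qed
  have ex1: "\<exists>!x::real. x > 0 \<and> exp ((real l / real r) * x) * (1 - x) = 1"
    using psi_root_unique[OF c1] unfolding c_def L_def R_def .
  have alow': "1 - R^2/L^2 < \<alpha>" using alow c2 by simp
  have G: "m < R * L^2 / (L^2 - R^2)"
  proof -
    have pos: "1 - R^2/L^2 > 0" using r2 rl by (simp add: field_simps power_strict_mono)
    have "R / \<alpha> < R / (1 - R^2/L^2)" using alow' pos r2
      by (intro divide_strict_left_mono) auto
    also have "R / (1 - R^2/L^2) = R * L^2 / (L^2 - R^2)" using rl r2 by (simp add: field_simps)
    finally show ?thesis using CD by linarith
  qed
  have mr1: "m > R - 1" using mR by linarith
  show ?thesis using B CD ex1 alow' aprops G mr1 unfolding L_def R_def by auto
qed

end
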